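(* Let $L$ be a finite graded lattice of rank $n$ with an $S_n$ EL-labeling, and let $\mathfrak m$ be a maximal chain of $L$. Then distinct elements of $\mathcal{M}_{\mathfrak m}$ have distinct label permutations, and the set $\{\omega_{\mathfrak m'}:\mathfrak m'\in\mathcal{M}_{\mathfrak m}\}$ is exactly the set of permutations $\omega$ of $[n]$ with $\omega\le_R\omega_{\mathfrak m}$, each occurring for exactly one $\mathfrak m'\in\mathcal{M}_{\mathfrak m}$.
   Context: An $S_n$ EL-labeling of a finite graded poset with $\hat0,\hat1$ is an edge-labeling of covering pairs such that each interval has exactly one maximal chain with weakly increasing labels (bottom to top), lexicographically smallest among its maximal chains, and labels along each maximal chain $\mathfrak m$ form a permutation $\omega_{\mathfrak m}$ of $[n]$. For $i\in[n-1]$, $U_i(\mathfrak m)$ is the unique maximal chain agreeing with $\mathfrak m$ except possibly at rank $i$ whose label permutation has no descent at $i$. $\mathcal{M}_{\mathfrak m}$ is the set of all maximal chains $U_{i_1}U_{i_2}\cdots U_{i_r}(\mathfrak m)$ for all finite sequences $i_1,\dots,i_r$ in $[n-1]$ (including the empty one). For a permutation $v$ of $[n]$, $\mathrm{INV}(v)=\{(v(j),v(i)): i<j,\ v(i)>v(j)\}$; the (right) weak order is $v\le_R w$ iff $\mathrm{INV}(v)\subseteq\mathrm{INV}(w)$ (equivalently $v$ is obtained from $w$ by successively right-multiplying by adjacent transpositions $s_i$ each decreasing the number of inversions by one). *)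

theory Defs
  imports "HOL-Combinatorics.Permutations"
begin

text \<open>Posets are finite lattices given as a type of class finite and lattice.
Chains are lists of elements, bottom to top.\<close>

definition covers :: "'a::order \<Rightarrow> 'a \<Rightarrow> bool" where
  "covers x y \<longleftrightarrow> x < y \<and> \<not> (\<exists>z. x < z \<and> z < y)"

definition sat_chain :: "'a::order \<Rightarrow> 'a \<Rightarrow> 'a list \<Rightarrow> bool" where
  "sat_chain x y c \<longleftrightarrow> c \<noteq> [] \<and> hd c = x \<and> last c = y \<and>
     (\<forall>k. Suc k < length c \<longrightarrow> covers (c ! k) (c ! Suc k))"

definition max_chain :: "'a::order list \<Rightarrow> bool" where
  "max_chain c \<longleftrightarrow> c \<noteq> [] \<and> (\<forall>z. hd c \<le> z) \<and> (\<forall>z. z \<le> last c) \<and>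
     sat_chain (hd c) (last c) c"

definition graded_rank :: "'a::order itself \<Rightarrow> nat \<Rightarrow> bool" where
  "graded_rank _ n \<longleftrightarrow> (\<forall>c::'a list. max_chain c \<longrightarrow> length c = Suc n)"

definition labels :: "('a \<Rightarrow> 'a \<Rightarrow> nat) \<Rightarrow> 'a list \<Rightarrow> nat list" where
  "labels lam c = map (\<lambda>k. lam (c ! k) (c ! Suc k)) [0..<length c - 1]"

definition EL_labeling :: "('a::order \<Rightarrow> 'a \<Rightarrow> nat) \<Rightarrow> bool" where
  "EL_labeling lam \<longleftrightarrow>
     (\<forall>x y. x \<le> y \<longrightarrow>
        (\<exists>!c. sat_chain x y c \<and> sorted (labels lam c)) \<and>
        (\<forall>c c'. sat_chain x y c \<and> sorted (labels lam c) \<and> sat_chain x y c' \<and> c' \<noteq> c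
           \<longrightarrow> (labels lam c, labels lam c') \<in> lexord {(a, b). a < b}))"

definition Sn_EL_labeling :: "nat \<Rightarrow> ('a::order \<Rightarrow> 'a \<Rightarrow> nat) \<Rightarrow> bool" where
  "Sn_EL_labeling n lam \<longleftrightarrow> EL_labeling lam \<and>
     (\<forall>c. max_chain c \<longrightarrow> distinct (labels lam c) \<and> set (labels lam c) = {1..n})"

definition label_perm :: "nat \<Rightarrow> ('a \<Rightarrow> 'a \<Rightarrow> nat) \<Rightarrow> 'a list \<Rightarrow> nat \<Rightarrow> nat" where
  "label_perm n lam c j = (if j \<in> {1..n} then labels lam c ! (j - 1) else j)"

definition U_op :: "nat \<Rightarrow> ('a::order \<Rightarrow> 'a \<Rightarrow> nat) \<Rightarrow> nat \<Rightarrow> 'a list \<Rightarrow> 'a list" where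
  "U_op n lam i c = (THE c'. max_chain c' \<and> length c' = length c \<and>
       (\<forall>j < length c. j \<noteq> i \<longrightarrow> c' ! j = c ! j) \<and>
       \<not> (label_perm n lam c' i > label_perm n lam c' (Suc i)))"

inductive_set M_set :: "nat \<Rightarrow> ('a::order \<Rightarrow> 'a \<Rightarrow> nat) \<Rightarrow> 'a list \<Rightarrow> 'a list set"
  for n lam c where
  base: "c \<in> M_set n lam c"
| step: "c' \<in> M_set n lam c \<Longrightarrow> i \<in> {1..n-1} \<Longrightarrow> U_op n lam i c' \<in> M_set n lam c"

definition INV :: "nat \<Rightarrow> (nat \<Rightarrow> nat) \<Rightarrow> (nat \<times> nat) set" where
  "INV n v = {(v j, v i) | i j. i \<in> {1..n} \<and> j \<in> {1..n} \<and> i < j \<and> v i > v j}"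

definition weak_le :: "nat \<Rightarrow> (nat \<Rightarrow> nat) \<Rightarrow> (nat \<Rightarrow> nat) \<Rightarrow> bool" where
  "weak_le n v w \<longleftrightarrow> INV n v \<subseteq> INV n w"

end

theory Submission
  imports Defs
begin


lemma INV_mem: "(x,y) \<in> INV n w \<longleftrightarrow> (\<exists>i j. x = w j \<and> y = w i \<and> i \<in> {1..n} \<and> j \<in> {1..n} \<and> i < j \<and> w j < w i)"
  unfolding INV_def by auto

lemma INV_iff:
  assumes "w permutes {1..n}"
  shows "(x,y) \<in> INV n w \<longleftrightarrow> x \<in> {1..n} \<and> y \<in> {1..n} \<and> x < y \<and> inv w y < inv w x"
proof
  assume "(x,y) \<in> INV n w"
  then obtain i j where ij: "x = w j" "y = w i" "i \<in> {1..n}" "j \<in> {1..n}" "i < j" "w i > w j"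
    unfolding INV_mem by blast
  have "inv w (w j) = j" "inv w (w i) = i" using permutes_inverses(2)[OF assms] by auto
  moreover have "w j \<in> {1..n}" "w i \<in> {1..n}"
    using permutes_in_image[OF assms] ij(3,4) by blast+
  ultimately show "x \<in> {1..n} \<and> y \<in> {1..n} \<and> x < y \<and> inv w y < inv w x"
    using ij by simp
next
  assume h: "x \<in> {1..n} \<and> y \<in> {1..n} \<and> x < y \<and> inv w y < inv w x"
  have pi: "inv w permutes {1..n}" using permutes_inv[OF assms] .
  have a: "inv w y \<in> {1..n}" "inv w x \<in> {1..n}" using h permutes_in_image[OF pi] by auto
  have b: "w (inv w y) = y" "w (inv w x) = x" using permutes_inverses(1)[OF assms] by auto
  show "(x,y) \<in> INV n w" unfolding INV_mem
    by (rule exI[of _ "inv w y"], rule exI[of _ "inv w x"]) (use a b h in auto)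
qed

lemma INV_sub: "INV n w \<subseteq> {1..n} \<times> {1..n}" if "w permutes {1..n}"
  using INV_iff[OF that] by auto

lemma INV_finite: "w permutes {1..n} \<Longrightarrow> finite (INV n w)"
  using INV_sub finite_subset by blast

lemma notinv_iff:
  assumes "w permutes {1..n}" "x \<in> {1..n}" "y \<in> {1..n}" "x < y"
  shows "(x,y) \<notin> INV n w \<longleftrightarrow> inv w x < inv w y"
proof -
  have "inv w x \<noteq> inv w y" using assms permutes_inj[OF permutes_inv[OF assms(1)]]
    by (metis inj_eq less_irrefl)
  then show ?thesis using INV_iff[OF assms(1)] assms by auto
qed

lemma transpose_less:
  assumes "p \<noteq> q" "\<not> (p = i \<and> q = Suc i)"
  shows "Transposition.transpose i (Suc i) q < Transposition.transpose i (Suc i) p \<longleftrightarrow> q < p \<and> \<not> (p = Suc i \<and> q = i)"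
proof -
  consider "p = i" | "p = Suc i" "q = i" | "p = Suc i" "q \<noteq> i" | "p \<noteq> i" "p \<noteq> Suc i" "q = i"
    | "p \<noteq> i" "p \<noteq> Suc i" "q = Suc i" | "p \<noteq> i" "p \<noteq> Suc i" "q \<noteq> i" "q \<noteq> Suc i" by blast
  then show ?thesis
  proof cases
    case 1 then show ?thesis using assms by (auto simp: Transposition.transpose_def)
  next
    case 2 then show ?thesis by (auto simp: Transposition.transpose_def)
  next
    case 3 then show ?thesis using assms by (auto simp: Transposition.transpose_def)
  next
    case 4 then show ?thesis by (auto simp: Transposition.transpose_def)
  next
    case 5 then show ?thesis by (auto simp: Transposition.transpose_def)
  next
    case 6 then show ?thesis by (auto simp: Transposition.transpose_def)
  qed
qed

lemma INV_swap:
  assumes w: "w permutes {1..n}" and i: "i \<in> {1..n-1}" and d: "w i > w (Suc i)"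
  shows "INV n (w \<circ> Transposition.transpose i (Suc i)) = INV n w - {(w (Suc i), w i)}"
proof -
  let ?s = "Transposition.transpose i (Suc i)"
  have sp: "?s permutes {1..n}" using i by (intro permutes_swap_id) auto
  have ws: "w \<circ> ?s permutes {1..n}" using permutes_compose[OF sp w] .
  have invc: "inv (w \<circ> ?s) = ?s \<circ> inv w"
    using o_inv_distrib[OF permutes_bij[OF w] bij_transpose[of i "Suc i"]] inv_transpose_eq[of i "Suc i"]
    by simp
  have iw1: "inv w (w i) = i" "inv w (w (Suc i)) = Suc i"
    using permutes_inverses(2)[OF w] by auto
  show ?thesis
  proof (rule set_eqI)
    fix xy :: "nat \<times> nat"
    obtain x y where xy: "xy = (x,y)" by (cases xy)
    have "(x,y) \<in> INV n (w \<circ> ?s) \<longleftrightarrow> (x,y) \<in> INV n w - {(w (Suc i), w i)}"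
    proof (cases "x \<in> {1..n} \<and> y \<in> {1..n} \<and> x < y")
      case True
      define p where "p = inv w x"
      define q where "q = inv w y"
      have xp: "x = w p" "y = w q" unfolding p_def q_def
        using permutes_inverses(1)[OF w] by auto
      have pq: "p \<noteq> q" using True xp by auto
      have key: "(x,y) = (w (Suc i), w i) \<longleftrightarrow> p = Suc i \<and> q = i"
        using iw1 xp p_def q_def by auto
      have e1: "inv (w \<circ> ?s) x = ?s p" "inv (w \<circ> ?s) y = ?s q"
        using invc p_def q_def by auto
      have nq: "\<not> (p = i \<and> q = Suc i)" using xp True d by auto
      have e2: "?s q < ?s p \<longleftrightarrow> q < p \<and> \<not> (p = Suc i \<and> q = i)"
        using transpose_less[OF pq nq] .
      have e3: "(x,y) \<in> INV n (w \<circ> ?s) \<longleftrightarrow> ?s q < ?s p"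
        using True e1 INV_iff[OF ws, of x y] by simp
      have e4: "(x,y) \<in> INV n w \<longleftrightarrow> q < p"
        using True INV_iff[OF w, of x y] p_def q_def by simp
      show ?thesis using e2 e3 e4 key by blast
    next
      case False
      then show ?thesis using INV_iff[OF ws, of x y] INV_iff[OF w, of x y] by blast
    qed
    then show "xy \<in> INV n (w \<circ> ?s) \<longleftrightarrow> xy \<in> INV n w - {(w (Suc i), w i)}" using xy by simp
  qed
qed

lemma card_pos:
  assumes f: "f permutes {1..n}" and a: "a \<in> {1..n}"
  shows "card {b\<in>{1..n}. f b \<le> f a} = f a"
proof -
  have fa: "f a \<in> {1..n}" using permutes_in_image[OF f] a by auto
  have img: "f ` {b\<in>{1..n}. f b \<le> f a} = {1..f a}"
  proof
    show "f ` {b\<in>{1..n}. f b \<le> f a} \<subseteq> {1..f a}"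
    proof
      fix k assume "k \<in> f ` {b\<in>{1..n}. f b \<le> f a}"
      then obtain b where b: "b \<in> {1..n}" "f b \<le> f a" "k = f b" by blast
      have "f b \<in> {1..n}" using permutes_in_image[OF f] b(1) by blast
      then show "k \<in> {1..f a}" using b by simp
    qed
    show "{1..f a} \<subseteq> f ` {b\<in>{1..n}. f b \<le> f a}"
    proof
      fix k assume k: "k \<in> {1..f a}"
      then have "k \<in> {1..n}" using fa by simp
      then have "k \<in> f ` {1..n}" using permutes_image[OF f] by simp
      then obtain b where "b \<in> {1..n}" "k = f b" by blast
      then show "k \<in> f ` {b\<in>{1..n}. f b \<le> f a}" using k by simp
    qed
  qed
  have inj: "inj_on f {b\<in>{1..n}. f b \<le> f a}"
    using permutes_inj[OF f] inj_on_subset by blast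
  have "card {b\<in>{1..n}. f b \<le> f a} = card (f ` {b\<in>{1..n}. f b \<le> f a})"
    using card_image[OF inj] by simp
  also have "\<dots> = f a" using img by simp
  finally show ?thesis .
qed

lemma perm_det:
  assumes v: "v permutes {1..n}" and w: "w permutes {1..n}" and e: "INV n v = INV n w"
  shows "v = w"
proof -
  let ?P = "inv v" and ?Q = "inv w"
  have Pp: "?P permutes {1..n}" and Qp: "?Q permutes {1..n}"
    using permutes_inv v w by auto
  have Pi: "inj ?P" and Qi: "inj ?Q" using permutes_inj Pp Qp by auto
  have ord: "?P b \<le> ?P a \<longleftrightarrow> ?Q b \<le> ?Q a" if "a \<in> {1..n}" "b \<in> {1..n}" for a b
  proof (cases a b rule: linorder_cases)
    case less
    have "(a,b) \<in> INV n v \<longleftrightarrow> (a,b) \<in> INV n w" using e by simp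
    then have "?P b < ?P a \<longleftrightarrow> ?Q b < ?Q a" using INV_iff[OF v] INV_iff[OF w] that less by simp
    moreover have "?P b \<noteq> ?P a" "?Q b \<noteq> ?Q a" using Pi Qi less by (auto dest: injD)
    ultimately show ?thesis by auto
  next
    case equal then show ?thesis by simp
  next
    case greater
    have "(b,a) \<in> INV n v \<longleftrightarrow> (b,a) \<in> INV n w" using e by simp
    then have "?P a < ?P b \<longleftrightarrow> ?Q a < ?Q b" using INV_iff[OF v] INV_iff[OF w] that greater by simp
    moreover have "?P b \<noteq> ?P a" "?Q b \<noteq> ?Q a" using Pi Qi greater by (auto dest: injD)
    ultimately show ?thesis by auto
  qed
  have "?P a = ?Q a" for a
  proof (cases "a \<in> {1..n}")
    case True
    have "{b\<in>{1..n}. ?P b \<le> ?P a} = {b\<in>{1..n}. ?Q b \<le> ?Q a}" using ord True by auto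
    then show ?thesis using card_pos[OF Pp True] card_pos[OF Qp True] by simp
  next
    case False
    then show ?thesis using permutes_not_in[OF Pp] permutes_not_in[OF Qp] by simp
  qed
  then have "?P = ?Q" by auto
  then show ?thesis using permutes_bij[OF v] permutes_bij[OF w] by (metis inv_inv_eq)
qed

lemma trans_noninv:
  assumes v: "v permutes {1..n}" and abc: "a \<in> {1..n}" "b \<in> {1..n}" "c \<in> {1..n}" "a < b" "b < c"
    and "(a,b) \<notin> INV n v" "(b,c) \<notin> INV n v"
  shows "(a,c) \<notin> INV n v"
  using assms notinv_iff[OF v] by (meson less_trans)

lemma swap_char:
  assumes w: "w permutes {1..n}" and w': "w' permutes {1..n}" and i: "i \<in> {1..n-1}"
    and same: "\<And>j. j \<noteq> i \<Longrightarrow> j \<noteq> Suc i \<Longrightarrow> w' j = w j"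
    and d: "w (Suc i) < w i" and nd: "w' i \<le> w' (Suc i)"
  shows "w' = w \<circ> Transposition.transpose i (Suc i)"
proof -
  have iS: "i \<in> {1..n}" "Suc i \<in> {1..n}" using i by auto
  have inw': "inj w'" using permutes_inj[OF w'] .
  have mem: "w' j = w i \<or> w' j = w (Suc i)" if j: "j = i \<or> j = Suc i" for j
  proof -
    have "j \<in> {1..n}" using iS j by blast
    then have wj: "w' j \<in> {1..n}" using permutes_in_image[OF w'] by blast
    have wi: "w ` {1..n} = {1..n}" using permutes_image[OF w] .
    have "w' j \<in> w ` {1..n}" using wj unfolding wi .
    then obtain k where k: "k \<in> {1..n}" "w k = w' j" by (rule imageE) simp
    show ?thesis
    proof (cases "k = i \<or> k = Suc i")
      case True then show ?thesis using k by auto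
    next
      case False
      then have "w' k = w' j" using same[of k] k by simp
      then have "k = j" using inw' by (simp add: inj_eq)
      then show ?thesis using False j by simp
    qed
  qed
  have ne: "w' i \<noteq> w' (Suc i)" using inj_eq[OF inw', of i "Suc i"] by simp
  have a: "w' i = w (Suc i)"
  proof (rule ccontr)
    assume "w' i \<noteq> w (Suc i)"
    then have a1: "w' i = w i" using mem[of i] by blast
    then have "w' (Suc i) \<noteq> w i" using ne by simp
    then have "w' (Suc i) = w (Suc i)" using mem[of "Suc i"] by blast
    then show False using nd d a1 by simp
  qed
  have b: "w' (Suc i) = w i"
  proof -
    have "w' (Suc i) \<noteq> w (Suc i)" using ne a by simp
    then show ?thesis using mem[of "Suc i"] by blast
  qed
  show ?thesis
  proof
    fix j show "w' j = (w \<circ> Transposition.transpose i (Suc i)) j"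
    proof (cases "j = i \<or> j = Suc i")
      case True then show ?thesis using a b by auto
    next
      case False then show ?thesis using same[of j] by simp
    qed
  qed
qed

lemma exists_desc:
  assumes v: "v permutes {1..n}" and w: "w permutes {1..n}" and sub: "INV n v \<subseteq> INV n w"
    and ne: "v \<noteq> w"
  shows "\<exists>i\<in>{1..n-1}. w (Suc i) < w i \<and> (w (Suc i), w i) \<notin> INV n v"
proof -
  let ?Q = "inv v"
  have Qp: "?Q permutes {1..n}" using permutes_inv[OF v] .
  have Qi: "inj ?Q" using permutes_inj[OF Qp] .
  have winv: "inv w (w k) = k" for k using permutes_inverses(2)[OF w] .
  have wim: "k \<in> {1..n} \<Longrightarrow> w k \<in> {1..n}" for k using permutes_in_image[OF w] by auto
  have wi: "inj w" using permutes_inj[OF w] .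
  define bad where "bad p q \<longleftrightarrow> p \<in> {1..n} \<and> q \<in> {1..n} \<and> p < q \<and> w q < w p \<and> (w q, w p) \<notin> INV n v" for p q
  have "INV n v \<noteq> INV n w" using perm_det[OF v w] ne by blast
  then have "INV n v \<subset> INV n w" using sub by (rule psubsetI[rotated])
  then obtain p where p: "p \<in> INV n w" "p \<notin> INV n v" using psubset_imp_ex_mem by blast
  obtain x y where "p = (x,y)" by (cases p)
  then have xy: "(x,y) \<in> INV n w" "(x,y) \<notin> INV n v" using p by auto
  then have "bad (inv w y) (inv w x)"
    using INV_iff[OF w] permutes_inverses(1)[OF w] permutes_in_image[OF permutes_inv[OF w]]
    unfolding bad_def by auto
  then have "\<exists>g. \<exists>p q. bad p q \<and> q - p = g" by blast
  then obtain g where g: "\<exists>p q. bad p q \<and> q - p = g" and gmin: "\<And>g'. g' < g \<Longrightarrow> \<not> (\<exists>p q. bad p q \<and> q - p = g')"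
    using exists_least_iff[of "\<lambda>g. \<exists>p q. bad p q \<and> q - p = g"] by blast
  obtain p q where pq: "bad p q" "q - p = g" using g by blast
  have G: "?Q (w a) < ?Q (w b)" if ab: "a \<in> {1..n}" "b \<in> {1..n}" "a < b" "b - a < g" for a b
  proof (cases "w a < w b")
    case True
    have "(w a, w b) \<notin> INV n w" using INV_iff[OF w] winv ab by auto
    then have "(w a, w b) \<notin> INV n v" using sub by blast
    then show ?thesis using notinv_iff[OF v] True wim ab by auto
  next
    case False
    then have "w b < w a" using wi ab by (metis injD linorder_neqE_nat less_irrefl)
    then have "(w b, w a) \<in> INV n v" using gmin[OF ab(4)] ab unfolding bad_def by blast
    then show ?thesis using INV_iff[OF v] by auto
  qed
  show ?thesis
  proof (cases "q = Suc p")
    case True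
    then show ?thesis using pq unfolding bad_def by (intro bexI[of _ p]) auto
  next
    case False
    then have sp: "Suc p < q" using pq unfolding bad_def by auto
    have "?Q (w p) < ?Q (w (Suc p))" using G[of p "Suc p"] pq sp unfolding bad_def by auto
    moreover have "?Q (w (Suc p)) < ?Q (w q)" using G[of "Suc p" q] pq sp unfolding bad_def by auto
    moreover have "?Q (w q) < ?Q (w p)" using pq notinv_iff[OF v] wim unfolding bad_def by auto
    ultimately show ?thesis by simp
  qed
qed




lemma sat_chain_single: "sat_chain a b [x] \<longleftrightarrow> x = a \<and> x = b"
  unfolding sat_chain_def by auto

lemma sat_chain_Cons2: "sat_chain a b (x#y#zs) \<longleftrightarrow> x = a \<and> covers x y \<and> sat_chain y b (y#zs)"
proof
  assume h: "sat_chain a b (x#y#zs)"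
  have "\<forall>k. Suc k < length (y#zs) \<longrightarrow> covers ((y#zs) ! k) ((y#zs) ! Suc k)"
  proof (intro allI impI)
    fix k assume "Suc k < length (y#zs)"
    then have "Suc (Suc k) < length (x#y#zs)" by simp
    then have "covers ((x#y#zs) ! Suc k) ((x#y#zs) ! Suc (Suc k))" using h unfolding sat_chain_def by blast
    then show "covers ((y#zs) ! k) ((y#zs) ! Suc k)" by simp
  qed
  then show "x = a \<and> covers x y \<and> sat_chain y b (y#zs)"
    using h unfolding sat_chain_def by (auto elim: allE[of _ 0])
next
  assume h: "x = a \<and> covers x y \<and> sat_chain y b (y#zs)"
  show "sat_chain a b (x#y#zs)" unfolding sat_chain_def
  proof (intro conjI allI impI)
    fix k assume k: "Suc k < length (x#y#zs)"
    show "covers ((x#y#zs) ! k) ((x#y#zs) ! Suc k)"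
    proof (cases k)
      case 0 then show ?thesis using h by auto
    next
      case (Suc k')
      then have "Suc k' < length (y#zs)" using k by simp
      then show ?thesis using h Suc unfolding sat_chain_def by auto
    qed
  qed (use h in \<open>auto simp: sat_chain_def\<close>)
qed

lemma sat_chain_append:
  "sat_chain a b d1 \<Longrightarrow> sat_chain b e d2 \<Longrightarrow> sat_chain a e (d1 @ tl d2)"
proof (induction d1 arbitrary: a)
  case Nil then show ?case by (simp add: sat_chain_def)
next
  case (Cons x xs)
  show ?case
  proof (cases xs)
    case Nil
    then have "x = a" "x = b" using Cons.prems sat_chain_single by auto
    moreover obtain y ys where "d2 = y # ys" using Cons.prems(2) unfolding sat_chain_def
      by (cases d2) auto
    ultimately show ?thesis using Cons.prems(2) Nil
      by (cases ys) (auto simp: sat_chain_Cons2 sat_chain_single)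
  next
    case (Cons y ys)
    have "sat_chain a b (x#y#ys)" using Cons.prems(1) \<open>xs = y#ys\<close> by simp
    then have h: "x = a" "covers x y" "sat_chain y b (y#ys)" using sat_chain_Cons2[of a b x y ys] by blast+
    have "sat_chain y e (xs @ tl d2)" using Cons.IH[of y] h Cons.prems(2) \<open>xs = y#ys\<close> by simp
    then have "sat_chain y e (y # (ys @ tl d2))" using \<open>xs = y#ys\<close> by simp
    then have "sat_chain a e (x # y # (ys @ tl d2))" using h sat_chain_Cons2[of a e x y "ys @ tl d2"] by blast
    then show ?thesis using \<open>xs = y#ys\<close> by simp
  qed
qed

lemma sat_chain_sub:
  assumes sc: "sat_chain a b c" and jk: "j \<le> k" "k < length c"
  shows "sat_chain (c!j) (c!k) (take (Suc k - j) (drop j c))"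
proof -
  let ?d = "take (Suc k - j) (drop j c)"
  have L: "length ?d = Suc k - j" using jk by simp
  have N: "?d ! t = c ! (j + t)" if "t < Suc k - j" for t using that jk by simp
  have ne: "?d \<noteq> []" using L jk by auto
  have h: "hd ?d = c!j" using N[of 0] ne by (simp add: hd_conv_nth)
  have l: "last ?d = c!k" using N[of "k - j"] ne L jk by (simp add: last_conv_nth)
  have cv: "covers (?d ! t) (?d ! Suc t)" if "Suc t < length ?d" for t
  proof -
    have "Suc (j + t) < length c" using that L jk by simp
    then have "covers (c ! (j + t)) (c ! Suc (j + t))" using sc unfolding sat_chain_def by blast
    then show ?thesis using N[of t] N[of "Suc t"] that L by simp
  qed
  show ?thesis unfolding sat_chain_def using ne h l cv by blast
qed

lemma length_labels: "length (labels lam c) = length c - 1"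
  unfolding labels_def by simp

lemma labels_nth: "k < length c - 1 \<Longrightarrow> labels lam c ! k = lam (c!k) (c!Suc k)"
  unfolding labels_def by simp

lemma labels3: "labels lam [x,z,y] = [lam x z, lam z y]"
  unfolding labels_def by (simp add: numeral_2_eq_2)

lemma labels4: "labels lam [x,z1,z2,y] = [lam x z1, lam z1 z2, lam z2 y]"
  unfolding labels_def by (simp add: numeral_3_eq_3)

lemma max_chain_iff: "max_chain c \<longleftrightarrow> c \<noteq> [] \<and> (\<forall>z. c!0 \<le> z) \<and> (\<forall>z. z \<le> c!(length c - 1)) \<and>
   (\<forall>k. Suc k < length c \<longrightarrow> covers (c!k) (c!Suc k))"
  unfolding max_chain_def sat_chain_def by (auto simp: hd_conv_nth last_conv_nth)




locale SnEL =
  fixes n :: nat and lam :: "'a::order \<Rightarrow> 'a \<Rightarrow> nat"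
  assumes gr: "graded_rank TYPE('a) n" and sn: "Sn_EL_labeling n lam"
begin

abbreviation om where "om c \<equiv> label_perm n lam c"

lemma len: "max_chain (c::'a list) \<Longrightarrow> length c = Suc n"
  using gr unfolding graded_rank_def by blast

lemma mc: assumes "max_chain (c::'a list)"
  shows "\<And>z. c!0 \<le> z" "\<And>z. z \<le> c!n" "\<And>k. k < n \<Longrightarrow> covers (c!k) (c!Suc k)"
  using assms len[OF assms] unfolding max_chain_iff by auto

lemma mc_intro:
  assumes "length (c::'a list) = Suc n" "\<And>z. c!0 \<le> z" "\<And>z. z \<le> c!n" "\<And>k. k < n \<Longrightarrow> covers (c!k) (c!Suc k)"
  shows "max_chain c"
  using assms unfolding max_chain_iff by auto

lemma lp_nth: "max_chain c \<Longrightarrow> j \<in> {1..n} \<Longrightarrow> om c j = lam (c!(j-1)) (c!j)"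
  unfolding label_perm_def using labels_nth[of "j-1" c lam] len[of c] by auto

lemma lp_out: "j \<notin> {1..n} \<Longrightarrow> om c j = j"
  unfolding label_perm_def by auto

lemma lp_perm: assumes "max_chain c" shows "om c permutes {1..n}"
proof (rule bij_imp_permutes)
  have L: "length (labels lam c) = n" using len[OF assms] length_labels[of lam c] by simp
  have d: "distinct (labels lam c)" and s: "set (labels lam c) = {1..n}"
    using sn assms unfolding Sn_EL_labeling_def by auto
  have "inj_on (om c) {1..n}"
  proof
    fix a b assume ab: "a \<in> {1..n}" "b \<in> {1..n}" "om c a = om c b"
    then have "labels lam c ! (a-1) = labels lam c ! (b-1)" unfolding label_perm_def by simp
    then have "a - 1 = b - 1" using d L ab nth_eq_iff_index_eq[OF d] by auto
    then show "a = b" using ab by auto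
  qed
  moreover have "om c ` {1..n} = {1..n}"
  proof -
    have "om c ` {1..n} = (\<lambda>k. labels lam c ! k) ` {0..<n}"
    proof
      show "om c ` {1..n} \<subseteq> (\<lambda>k. labels lam c ! k) ` {0..<n}"
        unfolding label_perm_def by (auto intro!: image_eqI)
      show "(\<lambda>k. labels lam c ! k) ` {0..<n} \<subseteq> om c ` {1..n}"
      proof
        fix x assume "x \<in> (\<lambda>k. labels lam c ! k) ` {0..<n}"
        then obtain k where "k < n" "x = labels lam c ! k" by auto
        then show "x \<in> om c ` {1..n}" unfolding label_perm_def
          by (intro image_eqI[of _ _ "Suc k"]) auto
      qed
    qed
    also have "\<dots> = set (labels lam c)" using L by (auto simp: set_conv_nth)
    finally show ?thesis using s by simp
  qed
  ultimately show "bij_betw (om c) {1..n} {1..n}" unfolding bij_betw_def by simp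
qed (simp add: lp_out)

lemma window:
  assumes c: "max_chain (c::'a list)" and i: "i \<in> {1..n-1}"
    and z: "covers (c!(i-1)) z" "covers z (c!Suc i)"
  shows "max_chain (c[i:=z])"
proof (rule mc_intro)
  have L: "length c = Suc n" using len[OF c] .
  show "length (c[i:=z]) = Suc n" using L by simp
  have i0: "i \<noteq> 0" "i \<noteq> n" using i by auto
  show "c[i:=z]!0 \<le> w" for w using mc(1)[OF c] i0 by simp
  show "w \<le> c[i:=z]!n" for w using mc(2)[OF c] i0 by simp
  show "covers (c[i:=z]!k) (c[i:=z]!Suc k)" if k: "k < n" for k
  proof -
    consider "Suc k = i" | "k = i" | "Suc k \<noteq> i \<and> k \<noteq> i" by blast
    then show ?thesis
    proof cases
      case 1 then show ?thesis using z L k by (auto simp: nth_list_update)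
    next
      case 2 then show ?thesis using z L k i by (auto simp: nth_list_update)
    next
      case 3 then show ?thesis using mc(3)[OF c k] L k by (auto simp: nth_list_update)
    qed
  qed
qed

lemma len3:
  assumes c: "max_chain (c::'a list)" and i: "i \<in> {1..n-1}" and d: "sat_chain (c!(i-1)) (c!Suc i) d"
  shows "length d = 3"
proof -
  have L: "length c = Suc n" using len[OF c] .
  have sc: "sat_chain (c!0) (c!n) c" using c L unfolding max_chain_def by (auto simp: hd_conv_nth last_conv_nth)
  have A: "sat_chain (c!0) (c!(i-1)) (take i c)"
    using sat_chain_sub[OF sc, of 0 "i-1"] i L by auto
  have B: "sat_chain (c!Suc i) (c!n) (drop (Suc i) c)"
    using sat_chain_sub[OF sc, of "Suc i" n] i L by auto
  let ?c' = "take i c @ tl (d @ tl (drop (Suc i) c))"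
  have S: "sat_chain (c!0) (c!n) ?c'"
    using sat_chain_append[OF A sat_chain_append[OF d B]] .
  have "max_chain ?c'" using S mc(1,2)[OF c] unfolding max_chain_def sat_chain_def by auto
  then have "length ?c' = Suc n" by (rule len)
  moreover have "d \<noteq> []" using d unfolding sat_chain_def by auto
  ultimately show ?thesis using L i by auto
qed

definition mid where "mid x y = (THE z. covers x z \<and> covers z y \<and> lam x z \<le> lam z y)"

lemma mid:
  assumes c: "max_chain c" and i: "i \<in> {1..n-1}"
  shows "covers (c!(i-1)) (mid (c!(i-1)) (c!Suc i))"
    "covers (mid (c!(i-1)) (c!Suc i)) (c!Suc i)"
    "lam (c!(i-1)) (mid (c!(i-1)) (c!Suc i)) \<le> lam (mid (c!(i-1)) (c!Suc i)) (c!Suc i)"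
    "\<And>z. covers (c!(i-1)) z \<Longrightarrow> covers z (c!Suc i) \<Longrightarrow> lam (c!(i-1)) z \<le> lam z (c!Suc i) \<Longrightarrow> z = mid (c!(i-1)) (c!Suc i)"
proof -
  let ?x = "c!(i-1)" and ?y = "c!Suc i"
  have L: "length c = Suc n" using len[OF c] .
  have "covers ?x (c!i)" "covers (c!i) ?y" using mc(3)[OF c, of "i-1"] mc(3)[OF c, of i] i by auto
  then have xy: "?x \<le> ?y" unfolding covers_def by auto
  have EL: "\<exists>!d. sat_chain ?x ?y d \<and> sorted (labels lam d)"
    using sn xy unfolding Sn_EL_labeling_def EL_labeling_def by blast
  then obtain d where d: "sat_chain ?x ?y d" "sorted (labels lam d)" by blast
  have "length d = 3" using len3[OF c i d(1)] .
  then obtain a b e where "d = [a,b,e]"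
    by (auto simp: numeral_3_eq_3 length_Suc_conv)
  then have dd: "d = [?x, b, ?y]" using d(1) unfolding sat_chain_def by auto
  have P: "covers ?x b \<and> covers b ?y \<and> lam ?x b \<le> lam b ?y"
    using d dd by (simp add: sat_chain_Cons2 sat_chain_single labels3)
  have U: "z = b" if "covers ?x z \<and> covers z ?y \<and> lam ?x z \<le> lam z ?y" for z
  proof -
    have "sat_chain ?x ?y [?x,z,?y] \<and> sorted (labels lam [?x,z,?y])"
      using that by (simp add: sat_chain_Cons2 sat_chain_single labels3)
    then have "[?x,z,?y] = d" using EL d by blast
    then show ?thesis using dd by simp
  qed
  have mb: "mid ?x ?y = b" unfolding mid_def using P U by (rule the_equality)
  show "covers ?x (mid ?x ?y)" using P unfolding mb by blast
  show "covers (mid ?x ?y) ?y" using P unfolding mb by blast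
  show "lam ?x (mid ?x ?y) \<le> lam (mid ?x ?y) ?y" using P unfolding mb by blast
  show "z = mid ?x ?y" if "covers ?x z" "covers z ?y" "lam ?x z \<le> lam z ?y" for z
    unfolding mb using U[of z] that by blast
qed

lemma U_eq:
  assumes c: "max_chain c" and i: "i \<in> {1..n-1}"
  shows "U_op n lam i c = c[i := mid (c!(i-1)) (c!Suc i)]"
proof -
  let ?x = "c!(i-1)" and ?y = "c!Suc i"
  let ?z = "mid ?x ?y"
  have L: "length c = Suc n" using len[OF c] .
  note m = mid[OF c i]
  have mz: "max_chain (c[i:=?z])" using window[OF c i m(1,2)] .
  show ?thesis unfolding U_op_def
  proof (rule the_equality)
    have "om (c[i:=?z]) i = lam ?x ?z" "om (c[i:=?z]) (Suc i) = lam ?z ?y"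
      using lp_nth[OF mz, of i] lp_nth[OF mz, of "Suc i"] i L by (auto simp: nth_list_update)
    then show "max_chain (c[i:=?z]) \<and> length (c[i:=?z]) = length c \<and>
      (\<forall>j<length c. j \<noteq> i \<longrightarrow> c[i:=?z] ! j = c ! j) \<and> \<not> om (c[i:=?z]) (Suc i) < om (c[i:=?z]) i"
      using mz m(3) by auto
  next
    fix c' assume h: "max_chain c' \<and> length c' = length c \<and> (\<forall>j<length c. j \<noteq> i \<longrightarrow> c' ! j = c ! j) \<and>
      \<not> om c' (Suc i) < om c' i"
    have L': "length c' = Suc n" using h L by simp
    have e1: "c'!(i-1) = ?x" "c'!Suc i = ?y" using h i L by auto
    have "covers ?x (c'!i)" "covers (c'!i) ?y" using mc(3)[OF conjunct1[OF h], of "i-1"] mc(3)[OF conjunct1[OF h], of i] i e1 by auto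
    moreover have "lam ?x (c'!i) \<le> lam (c'!i) ?y"
      using h lp_nth[OF conjunct1[OF h], of i] lp_nth[OF conjunct1[OF h], of "Suc i"] i e1 by auto
    ultimately have "c'!i = ?z" using m(4) by blast
    then show "c' = c[i:=?z]"
    proof (intro nth_equalityI)
      show "length c' = length (c[i:=?z])" using h by simp
      fix k assume "k < length c'"
      then show "c' ! k = c[i:=?z] ! k" using h L \<open>c'!i = ?z\<close> by (cases "k = i") auto
    qed
  qed
qed

end



lemma desc_in_INV: "i \<in> {1..n-1} \<Longrightarrow> w (Suc i) < w i \<Longrightarrow> (w (Suc i), w i) \<in> INV n w"
  unfolding INV_def by (rule CollectI, rule exI[of _ i], rule exI[of _ "Suc i"]) auto

context SnEL begin

abbreviation U where "U i c \<equiv> U_op n lam i c"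
abbreviation MM where "MM c \<equiv> M_set n lam c"
abbreviation sw where "sw i \<equiv> Transposition.transpose i (Suc i)"

lemma U_props:
  assumes c: "max_chain c" and i: "i \<in> {1..n-1}"
  shows "max_chain (U i c)" "length (U i c) = Suc n" "\<And>k. k \<noteq> i \<Longrightarrow> U i c ! k = c ! k"
    "\<not> om c (Suc i) < om c i \<Longrightarrow> U i c = c"
    "om c (Suc i) < om c i \<Longrightarrow> om (U i c) = om c \<circ> sw i"
proof -
  let ?x = "c!(i-1)" and ?y = "c!Suc i"
  let ?z = "mid ?x ?y"
  note m = mid[OF c i]
  have L: "length c = Suc n" using len[OF c] .
  have ue: "U i c = c[i := ?z]" using U_eq[OF c i] .
  show mu: "max_chain (U i c)" using window[OF c i m(1,2)] ue by simp
  show "length (U i c) = Suc n" using ue L by simp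
  show "\<And>k. k \<noteq> i \<Longrightarrow> U i c ! k = c ! k" using ue by simp
  show "U i c = c" if nd: "\<not> om c (Suc i) < om c i"
  proof -
    have "covers ?x (c!i)" "covers (c!i) ?y" using mc(3)[OF c, of "i-1"] mc(3)[OF c, of i] i by auto
    moreover have "lam ?x (c!i) \<le> lam (c!i) ?y" using nd lp_nth[OF c, of i] lp_nth[OF c, of "Suc i"] i by auto
    ultimately have "c!i = ?z" using m(4) by blast
    then show ?thesis using ue list_update_id[of c i] by simp
  qed
  show "om (U i c) = om c \<circ> sw i" if d: "om c (Suc i) < om c i"
  proof (rule swap_char[OF lp_perm[OF c] lp_perm[OF mu] i _ d])
    fix j assume j: "j \<noteq> i" "j \<noteq> Suc i"
    show "om (U i c) j = om c j"
    proof (cases "j \<in> {1..n}")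
      case True
      then show ?thesis using lp_nth[OF c True] lp_nth[OF mu True] ue j by auto
    next
      case False then show ?thesis using lp_out by simp
    qed
  next
    show "om (U i c) i \<le> om (U i c) (Suc i)"
      using lp_nth[OF mu, of i] lp_nth[OF mu, of "Suc i"] i ue m(3) L by (auto simp: nth_list_update)
  qed
qed

lemma M_trans:
  assumes "c' \<in> MM c" "c'' \<in> MM c'"
  shows "c'' \<in> MM c"
  using assms(2)
proof (induction rule: M_set.induct)
  case base show ?case using assms(1) .
next
  case (step d i) show ?case using M_set.step[OF step.IH step.hyps(2)] .
qed

lemma U_in: "i \<in> {1..n-1} \<Longrightarrow> U i c \<in> MM c"
  using M_set.step[OF M_set.base] by blast

lemma M_props:
  assumes c: "max_chain c" and c': "c' \<in> MM c"
  shows "max_chain c' \<and> INV n (om c') \<subseteq> INV n (om c)"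
  using c'
proof (induction rule: M_set.induct)
  case base then show ?case using c by simp
next
  case (step d i)
  then have d: "max_chain d" "INV n (om d) \<subseteq> INV n (om c)" by auto
  show ?case
  proof (cases "om d (Suc i) < om d i")
    case True
    have "INV n (om (U i d)) = INV n (om d) - {(om d (Suc i), om d i)}"
      using U_props(5)[OF d(1) step.hyps(2) True] INV_swap[OF lp_perm[OF d(1)] step.hyps(2) True] by simp
    then show ?thesis using U_props(1)[OF d(1) step.hyps(2)] d by blast
  next
    case False
    then show ?thesis using U_props[OF d(1) step.hyps(2)] d by auto
  qed
qed

lemma M_decomp:
  assumes c: "max_chain c" and c': "c' \<in> MM c"
  shows "c' = c \<or> (\<exists>i\<in>{1..n-1}. om c (Suc i) < om c i \<and> c' \<in> MM (U i c))"
  using c'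
proof (induction rule: M_set.induct)
  case base then show ?case by simp
next
  case (step d j)
  from step.IH show ?case
  proof
    assume "d = c"
    then show ?thesis
    proof (cases "om c (Suc j) < om c j")
      case True then show ?thesis using \<open>d = c\<close> step.hyps(2) by (auto intro: M_set.base)
    next
      case False
      have "U j c = c" using U_props(4)[of c j] c step.hyps(2) False by blast
      then show ?thesis using \<open>d = c\<close> by simp
    qed
  next
    assume "\<exists>i\<in>{1..n-1}. om c (Suc i) < om c i \<and> d \<in> MM (U i c)"
    then obtain i where i: "i \<in> {1..n-1}" "om c (Suc i) < om c i" "d \<in> MM (U i c)" by blast
    have "U j d \<in> MM (U i c)" using M_set.step[OF i(3) step.hyps(2)] .
    then show ?thesis using i(1,2) by blast
  qed
qed

lemma strict:
  assumes c: "max_chain c" and i: "i \<in> {1..n-1}" and d: "om c (Suc i) < om c i" and c': "c' \<in> MM (U i c)"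
  shows "INV n (om c') \<subseteq> INV n (om c) - {(om c (Suc i), om c i)}"
  using M_props[OF U_props(1)[OF c i] c'] U_props(5)[OF c i d] INV_swap[OF lp_perm[OF c] i d] by simp

lemma existence:
  "max_chain c \<Longrightarrow> v permutes {1..n} \<Longrightarrow> INV n v \<subseteq> INV n (om c) \<Longrightarrow> \<exists>c'\<in>MM c. om c' = v"
proof (induction "card (INV n (om c))" arbitrary: c rule: less_induct)
  case less
  show ?case
  proof (cases "v = om c")
    case True then show ?thesis by (auto intro: M_set.base)
  next
    case False
    obtain i where i: "i \<in> {1..n-1}" "om c (Suc i) < om c i" "(om c (Suc i), om c i) \<notin> INV n v"
      using exists_desc[OF less.prems(2) lp_perm[OF less.prems(1)] less.prems(3) False] by blast
    let ?c1 = "U i c"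
    have c1: "max_chain ?c1" using U_props(1)[OF less.prems(1) i(1)] .
    have e: "INV n (om ?c1) = INV n (om c) - {(om c (Suc i), om c i)}"
      using U_props(5)[OF less.prems(1) i(1,2)] INV_swap[OF lp_perm[OF less.prems(1)] i(1,2)] by simp
    have pin: "(om c (Suc i), om c i) \<in> INV n (om c)" using desc_in_INV i by blast
    have "card (INV n (om ?c1)) < card (INV n (om c))"
      unfolding e by (rule card_Diff1_less[OF INV_finite[OF lp_perm[OF less.prems(1)]] pin])
    moreover have "INV n v \<subseteq> INV n (om ?c1)" using e less.prems(3) i(3) by auto
    ultimately obtain c' where "c' \<in> MM ?c1" "om c' = v" using less.hyps[OF _ c1 less.prems(2)] by blast
    then show ?thesis using M_trans[OF U_in[OF i(1)]] by blast
  qed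
qed

end



context SnEL begin

lemma rank3_unique:
  assumes m: "max_chain m" and i: "i \<in> {1..n-1}" "Suc i \<in> {1..n-1}"
    and r1: "max_chain r1" "\<And>k. k \<noteq> i \<Longrightarrow> k \<noteq> Suc i \<Longrightarrow> r1!k = m!k"
      "om r1 i \<le> om r1 (Suc i)" "om r1 (Suc i) \<le> om r1 (Suc (Suc i))"
    and r2: "max_chain r2" "\<And>k. k \<noteq> i \<Longrightarrow> k \<noteq> Suc i \<Longrightarrow> r2!k = m!k"
      "om r2 i \<le> om r2 (Suc i)" "om r2 (Suc i) \<le> om r2 (Suc (Suc i))"
  shows "r1 = r2"
proof -
  let ?x = "m!(i-1)" and ?y = "m!Suc (Suc i)"
  have G: "sat_chain ?x ?y [?x, r!i, r!Suc i, ?y] \<and> sorted (labels lam [?x, r!i, r!Suc i, ?y])"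
    if r: "max_chain r" "\<And>k. k \<noteq> i \<Longrightarrow> k \<noteq> Suc i \<Longrightarrow> r!k = m!k"
      "om r i \<le> om r (Suc i)" "om r (Suc i) \<le> om r (Suc (Suc i))" for r
  proof -
    have e: "r!(i-1) = ?x" "r!Suc (Suc i) = ?y" using r(2) i by auto
    have cv: "covers ?x (r!i)" "covers (r!i) (r!Suc i)" "covers (r!Suc i) ?y"
      using mc(3)[OF r(1), of "i-1"] mc(3)[OF r(1), of i] mc(3)[OF r(1), of "Suc i"] i e by auto
    have l: "om r i = lam ?x (r!i)" "om r (Suc i) = lam (r!i) (r!Suc i)" "om r (Suc (Suc i)) = lam (r!Suc i) ?y"
      using lp_nth[OF r(1), of i] lp_nth[OF r(1), of "Suc i"] lp_nth[OF r(1), of "Suc (Suc i)"] i e by auto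
    show ?thesis using cv l r(3,4) by (simp add: sat_chain_Cons2 sat_chain_single labels4)
  qed
  have "covers ?x (m!i)" "covers (m!i) (m!Suc i)" "covers (m!Suc i) ?y"
    using mc(3)[OF m, of "i-1"] mc(3)[OF m, of i] mc(3)[OF m, of "Suc i"] i by auto
  then have xy: "?x \<le> ?y" unfolding covers_def by auto
  have EL: "\<exists>!d. sat_chain ?x ?y d \<and> sorted (labels lam d)"
    using sn xy unfolding Sn_EL_labeling_def EL_labeling_def by blast
  have "[?x, r1!i, r1!Suc i, ?y] = [?x, r2!i, r2!Suc i, ?y]"
    using EL G[OF r1] G[OF r2] by blast
  then have "r1!i = r2!i" "r1!Suc i = r2!Suc i" by auto
  moreover have "length r1 = length r2" using len r1(1) r2(1) by simp
  ultimately show ?thesis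
  proof (intro nth_equalityI)
    fix k assume "k < length r1"
    show "r1 ! k = r2 ! k"
    proof (cases "k = i \<or> k = Suc i")
      case True then show ?thesis using \<open>r1!i = r2!i\<close> \<open>r1!Suc i = r2!Suc i\<close> by auto
    next
      case False then show ?thesis using r1(2)[of k] r2(2)[of k] by simp
    qed
  qed
qed

lemma conf_lt:
  assumes m: "max_chain m" and i: "i \<in> {1..n-1}" and j: "j \<in> {1..n-1}" and ij: "i < j"
    and di: "om m (Suc i) < om m i" and dj: "om m (Suc j) < om m j"
  shows "\<exists>m3. m3 \<in> MM (U i m) \<and> m3 \<in> MM (U j m) \<and>
    (\<forall>v. v permutes {1..n} \<and> INV n v \<subseteq> INV n (om (U i m)) \<and> INV n v \<subseteq> INV n (om (U j m)) \<longrightarrow> INV n v \<subseteq> INV n (om m3))"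
proof -
  let ?w = "om m"
  have wp: "?w permutes {1..n}" using lp_perm[OF m] .
  let ?m1 = "U i m" and ?m2 = "U j m"
  have m1: "max_chain ?m1" and m2: "max_chain ?m2" using U_props(1) m i j by auto
  have om1: "om ?m1 = ?w \<circ> sw i" using U_props(5)[OF m i di] .
  have om2: "om ?m2 = ?w \<circ> sw j" using U_props(5)[OF m j dj] .
  have I1: "INV n (om ?m1) = INV n ?w - {(?w (Suc i), ?w i)}" using INV_swap[OF wp i di] om1 by simp
  have I2: "INV n (om ?m2) = INV n ?w - {(?w (Suc j), ?w j)}" using INV_swap[OF wp j dj] om2 by simp
  show ?thesis
  proof (cases "Suc i < j")
    case True
    let ?m3 = "U j ?m1"
    have "U i ?m2 = ?m3"
    proof -
      have a: "?m1!(j-1) = m!(j-1)" "?m1!Suc j = m!Suc j" using U_props(3)[OF m i] True by auto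
      have b: "?m2!(i-1) = m!(i-1)" "?m2!Suc i = m!Suc i" using U_props(3)[OF m j] True i by auto
      show ?thesis using U_eq[OF m1 j] U_eq[OF m2 i] U_eq[OF m i] U_eq[OF m j] a b ij
        by (simp add: list_update_swap)
    qed
    then have in2: "?m3 \<in> MM ?m2" using U_in[OF i] by metis
    have d1: "om ?m1 (Suc j) < om ?m1 j" using om1 dj True by (simp add: Transposition.transpose_def)
    have e1: "om ?m1 (Suc j) = ?w (Suc j)" "om ?m1 j = ?w j" using om1 True by (auto simp: Transposition.transpose_def)
    have I3: "INV n (om ?m3) = INV n (om ?m1) - {(?w (Suc j), ?w j)}"
      using INV_swap[OF lp_perm[OF m1] j d1] U_props(5)[OF m1 j d1] e1 by simp
    show ?thesis
      by (intro exI[of _ ?m3] conjI in2 U_in[OF j]) (use I1 I2 I3 in auto)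
  next
    case False
    then have jj: "j = Suc i" using ij by auto
    have i2: "Suc i \<in> {1..n-1}" using j jj by simp
    have abc: "?w (Suc (Suc i)) < ?w (Suc i)" "?w (Suc i) < ?w i" using dj di jj by auto
    let ?a = "U (Suc i) ?m1" and ?b = "U i ?m2"
    let ?r1 = "U i ?a" and ?r2 = "U (Suc i) ?b"
    have ma: "max_chain ?a" and mb: "max_chain ?b" using U_props(1) m1 m2 i i2 jj by auto
    have da: "om ?m1 (Suc (Suc i)) < om ?m1 (Suc i)" using om1 abc by (simp add: Transposition.transpose_def)
    have oa: "om ?a = ?w \<circ> sw i \<circ> sw (Suc i)" using U_props(5)[OF m1 i2 da] om1 by simp
    have da2: "om ?a (Suc i) < om ?a i" using oa abc by (simp add: Transposition.transpose_def)
    have or1: "om ?r1 = ?w \<circ> sw i \<circ> sw (Suc i) \<circ> sw i" using U_props(5)[OF ma i da2] oa by simp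
    have db: "om ?m2 (Suc i) < om ?m2 i" using om2 jj abc by (simp add: Transposition.transpose_def)
    have ob: "om ?b = ?w \<circ> sw (Suc i) \<circ> sw i" using U_props(5)[OF m2 i db] om2 jj by simp
    have db2: "om ?b (Suc (Suc i)) < om ?b (Suc i)" using ob abc by (simp add: Transposition.transpose_def)
    have or2: "om ?r2 = ?w \<circ> sw (Suc i) \<circ> sw i \<circ> sw (Suc i)" using U_props(5)[OF mb i2 db2] ob by simp
    have r1: "max_chain ?r1" "\<And>k. k \<noteq> i \<Longrightarrow> k \<noteq> Suc i \<Longrightarrow> ?r1!k = m!k"
      "om ?r1 i \<le> om ?r1 (Suc i)" "om ?r1 (Suc i) \<le> om ?r1 (Suc (Suc i))"
      using U_props(1,3)[OF ma i] U_props(3)[OF m1 i2] U_props(3)[OF m i] or1 abc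
      by (auto simp: Transposition.transpose_def)
    have r2: "max_chain ?r2" "\<And>k. k \<noteq> i \<Longrightarrow> k \<noteq> Suc i \<Longrightarrow> ?r2!k = m!k"
      "om ?r2 i \<le> om ?r2 (Suc i)" "om ?r2 (Suc i) \<le> om ?r2 (Suc (Suc i))"
      using U_props(1,3)[OF mb i2] U_props(3)[OF m2 i] U_props(3)[OF m j] jj or2 abc
      by (auto simp: Transposition.transpose_def)
    have eq: "?r1 = ?r2" using rank3_unique[OF m i i2 r1 r2] .
    have in1: "?r1 \<in> MM ?m1" using M_trans[OF U_in[OF i2] U_in[OF i]] .
    have in2: "?r1 \<in> MM ?m2" using M_trans[OF U_in[OF i] U_in[OF i2]] eq jj by simp
    have v1: "om ?m1 (Suc (Suc i)) = ?w (Suc (Suc i))" "om ?m1 (Suc i) = ?w i"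
      using om1 by simp_all
    have va: "om ?a (Suc i) = ?w (Suc (Suc i))" "om ?a i = ?w (Suc i)"
      using oa by simp_all
    have Ia: "INV n (om ?a) = INV n (om ?m1) - {(?w (Suc (Suc i)), ?w i)}"
      using INV_swap[OF lp_perm[OF m1] i2 da] U_props(5)[OF m1 i2 da] v1 by simp
    have Ir1: "INV n (om ?r1) = INV n (om ?a) - {(?w (Suc (Suc i)), ?w (Suc i))}"
      using INV_swap[OF lp_perm[OF ma] i da2] U_props(5)[OF ma i da2] va by simp
    have inr: "?w i \<in> {1..n}" "?w (Suc i) \<in> {1..n}" "?w (Suc (Suc i)) \<in> {1..n}"
      using permutes_in_image[OF wp] i i2 by auto
    show ?thesis
    proof (intro exI[of _ ?r1] conjI in1 in2 allI impI)
      fix v assume v: "v permutes {1..n} \<and> INV n v \<subseteq> INV n (om ?m1) \<and> INV n v \<subseteq> INV n (om ?m2)"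
      have p1: "(?w (Suc i), ?w i) \<notin> INV n v" using v I1 by auto
      have p3: "(?w (Suc (Suc i)), ?w (Suc i)) \<notin> INV n v" using v I2 jj by auto
      have p2: "(?w (Suc (Suc i)), ?w i) \<notin> INV n v"
        using trans_noninv[OF conjunct1[OF v] inr(3) inr(2) inr(1) abc p3 p1] .
      show "INV n v \<subseteq> INV n (om ?r1)" using v p2 p3 Ia Ir1 by auto
    qed
  qed
qed

lemma conf:
  assumes m: "max_chain m" and i: "i \<in> {1..n-1}" and j: "j \<in> {1..n-1}" and ij: "i \<noteq> j"
    and di: "om m (Suc i) < om m i" and dj: "om m (Suc j) < om m j"
  shows "\<exists>m3. m3 \<in> MM (U i m) \<and> m3 \<in> MM (U j m) \<and>
    (\<forall>v. v permutes {1..n} \<and> INV n v \<subseteq> INV n (om (U i m)) \<and> INV n v \<subseteq> INV n (om (U j m)) \<longrightarrow> INV n v \<subseteq> INV n (om m3))"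
proof (cases "i < j")
  case True then show ?thesis using conf_lt[OF m i j True di dj] by blast
next
  case False
  then have "j < i" using ij by auto
  then show ?thesis using conf_lt[OF m j i _ dj di] by blast
qed

lemma injM:
  "max_chain m \<Longrightarrow> c1 \<in> MM m \<Longrightarrow> c2 \<in> MM m \<Longrightarrow> om c1 = om c2 \<Longrightarrow> c1 = c2"
proof (induction "card (INV n (om m))" arbitrary: m c1 c2 rule: less_induct)
  case less
  note m = less.prems(1)
  have wp: "om m permutes {1..n}" using lp_perm[OF m] .
  have smaller: "card (INV n (om (U i m))) < card (INV n (om m))"
    if i: "i \<in> {1..n-1}" "om m (Suc i) < om m i" for i
  proof -
    have "INV n (om (U i m)) = INV n (om m) - {(om m (Suc i), om m i)}"
      using U_props(5)[OF m i] INV_swap[OF wp i] by simp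
    then show ?thesis using card_Diff1_less[OF INV_finite[OF wp] desc_in_INV[OF i]] by simp
  qed
  have neq: "om c \<noteq> om m" if "i \<in> {1..n-1}" "om m (Suc i) < om m i" "c \<in> MM (U i m)" for i c
  proof
    assume e: "om c = om m"
    have "(om m (Suc i), om m i) \<in> INV n (om c)" using desc_in_INV[OF that(1,2)] e by simp
    then show False using strict[OF m that] by blast
  qed
  from M_decomp[OF m less.prems(2)] M_decomp[OF m less.prems(3)] show ?case
  proof (elim disjE bexE conjE)
    assume "c1 = m" "c2 = m" then show ?thesis by simp
  next
    fix j assume "c1 = m" "j \<in> {1..n-1}" "om m (Suc j) < om m j" "c2 \<in> MM (U j m)"
    then show ?thesis using neq less.prems(4) by metis
  next
    fix i assume "c2 = m" "i \<in> {1..n-1}" "om m (Suc i) < om m i" "c1 \<in> MM (U i m)"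
    then show ?thesis using neq less.prems(4) by metis
  next
    fix i j assume i: "i \<in> {1..n-1}" "om m (Suc i) < om m i" and c1: "c1 \<in> MM (U i m)"
      and j: "j \<in> {1..n-1}" "om m (Suc j) < om m j" and c2: "c2 \<in> MM (U j m)"
    have mi: "max_chain (U i m)" and mj: "max_chain (U j m)" using U_props(1) m i j by auto
    show ?thesis
    proof (cases "i = j")
      case True
      then show ?thesis using less.hyps[OF smaller[OF i] mi c1 _ less.prems(4)] c2 by simp
    next
      case False
      obtain m3 where m3: "m3 \<in> MM (U i m)" "m3 \<in> MM (U j m)"
        "\<And>v. v permutes {1..n} \<and> INV n v \<subseteq> INV n (om (U i m)) \<and> INV n v \<subseteq> INV n (om (U j m)) \<Longrightarrow> INV n v \<subseteq> INV n (om m3)"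
        using conf[OF m i(1) j(1) False i(2) j(2)] by blast
      let ?v = "om c1"
      have c1p: "max_chain c1" "INV n ?v \<subseteq> INV n (om (U i m))" using M_props[OF mi c1] by auto
      have c2p: "INV n ?v \<subseteq> INV n (om (U j m))" using M_props[OF mj c2] less.prems(4) by auto
      have m3m: "max_chain m3" using M_props[OF mi m3(1)] by auto
      obtain d where d: "d \<in> MM m3" "om d = ?v"
        using existence[OF m3m lp_perm[OF c1p(1)] m3(3)] lp_perm[OF c1p(1)] c1p c2p by blast
      have "c1 = d" using less.hyps[OF smaller[OF i] mi c1 M_trans[OF m3(1) d(1)]] d(2) by simp
      moreover have "c2 = d" using less.hyps[OF smaller[OF j] mj c2 M_trans[OF m3(2) d(1)]] d(2) less.prems(4) by simp
      ultimately show ?thesis by simp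
    qed
  qed
qed

end

theorem mainTheorem6:
  fixes lam :: "'a::{finite, lattice} \<Rightarrow> 'a \<Rightarrow> nat" and n :: nat and m :: "'a list"
  assumes "graded_rank TYPE('a) n"
    and "Sn_EL_labeling n lam"
    and "max_chain m"
  shows "inj_on (label_perm n lam) (M_set n lam m)
    \<and> label_perm n lam ` M_set n lam m = {v. v permutes {1..n} \<and> weak_le n v (label_perm n lam m)}
    \<and> (\<forall>v. v permutes {1..n} \<and> weak_le n v (label_perm n lam m)
           \<longrightarrow> (\<exists>!m'. m' \<in> M_set n lam m \<and> label_perm n lam m' = v))"
proof -
  interpret SnEL n lam using assms(1,2) by unfold_locales
  have inj: "inj_on (label_perm n lam) (M_set n lam m)"
    by (rule inj_onI) (use injM[OF assms(3)] in blast)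
  have img: "label_perm n lam ` M_set n lam m = {v. v permutes {1..n} \<and> weak_le n v (label_perm n lam m)}"
  proof
    show "label_perm n lam ` M_set n lam m \<subseteq> {v. v permutes {1..n} \<and> weak_le n v (label_perm n lam m)}"
      using M_props[OF assms(3)] lp_perm unfolding weak_le_def by blast
    show "{v. v permutes {1..n} \<and> weak_le n v (label_perm n lam m)} \<subseteq> label_perm n lam ` M_set n lam m"
      using existence[OF assms(3)] unfolding weak_le_def by blast
  qed
  have ex1: "\<forall>v. v permutes {1..n} \<and> weak_le n v (label_perm n lam m)
           \<longrightarrow> (\<exists>!m'. m' \<in> M_set n lam m \<and> label_perm n lam m' = v)"
  proof (intro allI impI)
    fix v assume v: "v permutes {1..n} \<and> weak_le n v (label_perm n lam m)"
    then obtain c where "c \<in> M_set n lam m" "label_perm n lam c = v"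
      using existence[OF assms(3)] unfolding weak_le_def by blast
    then show "\<exists>!m'. m' \<in> M_set n lam m \<and> label_perm n lam m' = v"
      using injM[OF assms(3)] by blast
  qed
  show ?thesis using inj img ex1 by blast
qed

end
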